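(* Let $\mathfrak{l}$ be a finite-dimensional restricted Lie algebra over an algebraically closed field $\mathbb{K}$ of characteristic $p>0$, with $p$-map $a\mapsto a^{[p]}$, and let $\chi\in\mathfrak{l}^\ast$. On the vector space $\mathfrak{l}_\chi=\mathfrak{l}\oplus\mathbb{K}c$ define the Lie bracket $[a+\alpha c,b+\beta c]=[a,b]$ (so that $c$ is central and $\mathfrak{l}_\chi$ is the trivial central extension of $\mathfrak{l}$ as a Lie algebra) and the map $$(a+\alpha c)^{[p]}=a^{[p]}+(\chi(a)^p+\alpha^p)c\qquad(a\in\mathfrak{l},\ \alpha\in\mathbb{K}).$$ Then this defines a structure of restricted Lie algebra on $\mathfrak{l}_\chi$.
   Context: A restricted Lie algebra is a Lie algebra with a $p$-map satisfying Jacobson's axioms: $(\beta a)^{[p]}=\beta^p a^{[p]}$, $\operatorname{ad}(a^{[p]})=(\operatorname{ad}a)^p$, and $(a+b)^{[p]}=a^{[p]}+b^{[p]}+\sum_{i=1}^{p-1}s_i(a,b)$, where $i\,s_i(a,b)$ is the coefficient of $T^{i-1}$ in $(\operatorname{ad}(aT+b))^{p-1}(a)$. *)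

theory Defs
  imports "HOL-Library.Product_Plus" "HOL-Computational_Algebra.Polynomial"
begin

definition lie_algebra :: "('k::field \<Rightarrow> 'v::ab_group_add \<Rightarrow> 'v) \<Rightarrow> ('v \<Rightarrow> 'v \<Rightarrow> 'v) \<Rightarrow> bool" where
  "lie_algebra sc br \<longleftrightarrow> vector_space sc
     \<and> (\<forall>x y z. br (x + y) z = br x z + br y z)
     \<and> (\<forall>x y z. br x (y + z) = br x y + br x z)
     \<and> (\<forall>c x y. br (sc c x) y = sc c (br x y))
     \<and> (\<forall>c x y. br x (sc c y) = sc c (br x y))
     \<and> (\<forall>x. br x x = 0)
     \<and> (\<forall>x y z. br x (br y z) + br y (br z x) + br z (br x y) = 0)"

text \<open>Coefficient of T^(i-1) in (ad(aT+b))^(p-1)(a): sum over all words of length p-1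
in the letters a (True) and b (False) with exactly i-1 letters a of the iterated brackets.\<close>
definition ad_coeff :: "('v::ab_group_add \<Rightarrow> 'v \<Rightarrow> 'v) \<Rightarrow> nat \<Rightarrow> nat \<Rightarrow> 'v \<Rightarrow> 'v \<Rightarrow> 'v" where
  "ad_coeff br p i a b =
     (\<Sum>w\<in>{w::bool list. length w = p - 1 \<and> count_list w True = i - 1}.
        foldr (\<lambda>t acc. br (if t then a else b) acc) w a)"

text \<open>s_i(a,b), determined by i s_i(a,b) = ad_coeff (i is invertible for 1 <= i <= p-1).\<close>
definition jac_s :: "('k::field \<Rightarrow> 'v::ab_group_add \<Rightarrow> 'v) \<Rightarrow> ('v \<Rightarrow> 'v \<Rightarrow> 'v) \<Rightarrow> nat \<Rightarrow> nat \<Rightarrow> 'v \<Rightarrow> 'v \<Rightarrow> 'v" where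
  "jac_s sc br p i a b = sc (inverse (of_nat i)) (ad_coeff br p i a b)"

definition restricted_lie_algebra ::
  "('k::field \<Rightarrow> 'v::ab_group_add \<Rightarrow> 'v) \<Rightarrow> ('v \<Rightarrow> 'v \<Rightarrow> 'v) \<Rightarrow> ('v \<Rightarrow> 'v) \<Rightarrow> nat \<Rightarrow> bool" where
  "restricted_lie_algebra sc br pm p \<longleftrightarrow> lie_algebra sc br
     \<and> (\<forall>\<beta> a. pm (sc \<beta> a) = sc (\<beta> ^ p) (pm a))
     \<and> (\<forall>a b. br (pm a) b = (br a ^^ p) b)
     \<and> (\<forall>a b. pm (a + b) = pm a + pm b + (\<Sum>i=1..p-1. jac_s sc br p i a b))"

definition algebraically_closed :: "'k::field itself \<Rightarrow> bool" where
  "algebraically_closed _ \<longleftrightarrow> (\<forall>q::'k poly. degree q \<ge> 1 \<longrightarrow> (\<exists>x. poly q x = 0))"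

text \<open>The central extension l_chi = l \<oplus> K c, modelled on 'v \<times> 'k.\<close>
definition ext_scale :: "('k::field \<Rightarrow> 'v \<Rightarrow> 'v) \<Rightarrow> 'k \<Rightarrow> 'v \<times> 'k \<Rightarrow> 'v \<times> 'k" where
  "ext_scale sc \<beta> x = (sc \<beta> (fst x), \<beta> * snd x)"

definition ext_bracket :: "('v \<Rightarrow> 'v \<Rightarrow> 'v) \<Rightarrow> 'v \<times> 'k::field \<Rightarrow> 'v \<times> 'k \<Rightarrow> 'v \<times> 'k" where
  "ext_bracket br x y = (br (fst x) (fst y), 0)"

definition ext_pmap :: "('v \<Rightarrow> 'v) \<Rightarrow> ('v \<Rightarrow> 'k::field) \<Rightarrow> nat \<Rightarrow> 'v \<times> 'k \<Rightarrow> 'v \<times> 'k" where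
  "ext_pmap pm \<chi> p x = (pm (fst x), \<chi> (fst x) ^ p + snd x ^ p)"

end

theory Submission
  imports Defs "HOL-Computational_Algebra.Primes"
begin

lemma ext_foldr_fst:
  "fst (foldr (\<lambda>t acc. ext_bracket br (if t then a else b) acc) w a)
   = foldr (\<lambda>t acc. br (if t then fst a else fst b) acc) w (fst a)"
  by (induction w) (auto simp: ext_bracket_def)

lemma ext_foldr:
  assumes "w \<noteq> []"
  shows "foldr (\<lambda>t acc. ext_bracket br (if t then a else b) acc) w a
   = (foldr (\<lambda>t acc. br (if t then fst a else fst b) acc) w (fst a), 0)"
  using assms
proof (cases w)
  case (Cons t w')
  show ?thesis using ext_foldr_fst[of br a b w'] by (simp add: Cons ext_bracket_def)
qed simp

lemma ext_ad_coeff: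
  assumes "p \<ge> 2"
  shows "ad_coeff (ext_bracket br) p i a b = (ad_coeff br p i (fst a) (fst b), 0)"
proof -
  let ?W = "{w::bool list. length w = p - 1 \<and> count_list w True = i - 1}"
  have "ad_coeff (ext_bracket br) p i a b
     = (\<Sum>w\<in>?W. (foldr (\<lambda>t acc. br (if t then fst a else fst b) acc) w (fst a), 0))"
    unfolding ad_coeff_def
    by (rule sum.cong) (use assms in \<open>auto intro!: ext_foldr\<close>)
  also have "\<dots> = (ad_coeff br p i (fst a) (fst b), 0)"
    by (simp add: prod_eq_iff fst_sum snd_sum ad_coeff_def)
  finally show ?thesis .
qed

lemma ext_pow:
  "(ext_bracket br a ^^ Suc n) b = ((br (fst a) ^^ Suc n) (fst b), 0)"
  by (induction n) (auto simp: ext_bracket_def)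

theorem proposition1p2p3:
  fixes sc :: "'k::field \<Rightarrow> 'v::ab_group_add \<Rightarrow> 'v"
    and br :: "'v \<Rightarrow> 'v \<Rightarrow> 'v"
    and pm :: "'v \<Rightarrow> 'v"
    and \<chi> :: "'v \<Rightarrow> 'k"
    and p :: nat
  assumes "prime p" and "CHAR('k) = p"
    and "algebraically_closed TYPE('k)"
    and "\<exists>B. finite_dimensional_vector_space sc B"
    and "restricted_lie_algebra sc br pm p"
    and "Vector_Spaces.linear sc (*) \<chi>"
  shows "restricted_lie_algebra (ext_scale sc) (ext_bracket br) (ext_pmap pm \<chi> p) p"
proof -
  have p2: "p \<ge> 2" using assms(1) prime_ge_2_nat by blast
  have R: "lie_algebra sc br" "\<And>\<beta> a. pm (sc \<beta> a) = sc (\<beta> ^ p) (pm a)"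
    "\<And>a b. br (pm a) b = (br a ^^ p) b"
    "\<And>a b. pm (a + b) = pm a + pm b + (\<Sum>i=1..p-1. jac_s sc br p i a b)"
    using assms(5) unfolding restricted_lie_algebra_def by auto
  have VS: "vector_space sc" using R(1) unfolding lie_algebra_def by auto
  have L: "lie_algebra (ext_scale sc) (ext_bracket br)"
    using R(1) unfolding lie_algebra_def
    by (auto simp: vector_space_def ext_scale_def ext_bracket_def algebra_simps zero_prod_def)
  have chiadd: "\<And>x y. \<chi> (x + y) = \<chi> x + \<chi> y" and chisc: "\<And>c x. \<chi> (sc c x) = c * \<chi> x"
    using assms(6) unfolding Vector_Spaces.linear_iff by auto
  have frob: "\<And>x y::'k. (x + y) ^ p = x ^ p + y ^ p"
    using freshmans_dream[of "p"] assms(1,2) by auto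
  have A2: "\<forall>\<beta> a. ext_pmap pm \<chi> p (ext_scale sc \<beta> a) = ext_scale sc (\<beta> ^ p) (ext_pmap pm \<chi> p a)"
    by (auto simp: ext_pmap_def ext_scale_def R(2) chisc power_mult_distrib algebra_simps)
  have A3: "\<forall>a b. ext_bracket br (ext_pmap pm \<chi> p a) b = (ext_bracket br a ^^ p) b"
  proof (intro allI)
    fix a b :: "'v \<times> 'k"
    obtain n where n: "p = Suc n" using p2 by (cases p) auto
    show "ext_bracket br (ext_pmap pm \<chi> p a) b = (ext_bracket br a ^^ p) b"
      unfolding n ext_pow by (simp add: ext_bracket_def ext_pmap_def R(3)[unfolded n])
  qed
  have A4: "\<forall>a b. ext_pmap pm \<chi> p (a + b) = ext_pmap pm \<chi> p a + ext_pmap pm \<chi> p b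
      + (\<Sum>i=1..p-1. jac_s (ext_scale sc) (ext_bracket br) p i a b)"
  proof (intro allI)
    fix a b :: "'v \<times> 'k"
    have J: "jac_s (ext_scale sc) (ext_bracket br) p i a b = (jac_s sc br p i (fst a) (fst b), 0)" for i
      unfolding jac_s_def ext_ad_coeff[OF p2] by (simp add: ext_scale_def)
    show "ext_pmap pm \<chi> p (a + b) = ext_pmap pm \<chi> p a + ext_pmap pm \<chi> p b
      + (\<Sum>i=1..p-1. jac_s (ext_scale sc) (ext_bracket br) p i a b)"
      unfolding J by (simp add: prod_eq_iff fst_sum snd_sum ext_pmap_def R(4) chiadd frob algebra_simps)
  qed
  show ?thesis unfolding restricted_lie_algebra_def using L A2 A3 A4 by blast
qed

end
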